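(* Let $V$ be a nonempty set, $E\subset V\times V$, $W\subset V$, $W^c=V\setminus W$. Then $$\Delta_{W^c}\,R_W^-\,(E_W^{-1})^*(E_W)^*\,R_W\,\Delta_{W^c}=\Delta_{W^c}\,A_W\,\Delta_{W^c}.$$
   Context: Relations on $V$: composition $RR'$: $x(RR')y$ iff there is $z$ with $xRz$ and $zR'y$; $R^{-1}$ is the converse; $R^0=\Delta$, $R^{n+1}=RR^n$, $R^+=\bigcup_{k\ge1}R^k$, $R^*=\bigcup_{k\ge0}R^k$. For $S\subset V$, $\Delta_S=\{(x,x):x\in S\}$, $\Delta=\Delta_V$. Definitions: $E_W=\Delta_{W^c}E$; $B_W=E(E_W)^*$; $B_W^-=(B_W)^{-1}=(E_W^{-1})^*E^{-1}$; $K_W=B_W^-\Delta_{W^c}B_W$; $C_W=(\Delta_WK_W\Delta_W)^+\cup\Delta_W$; $A_W=\Delta\cup B_W\cup B_W^-\cup K_W\cup(B_W\cup K_W)\,C_W\,(B_W^-\cup K_W^{-1})$; $R_W=\Delta\cup C_W(B_W^-\cup K_W^{-1})$; $R_W^-=\Delta\cup(B_W\cup K_W)C_W$. *)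

theory Defs
  imports Main
begin

text \<open>Relations on a carrier set V are represented as sets of pairs; composition R R' is
  relcomp (R O R'), Delta_S is Id_on S, and R^* is taken relative to V: Delta_V union R^+.\<close>

definition rstar :: "'a set \<Rightarrow> 'a rel \<Rightarrow> 'a rel" where
  "rstar V R = Id_on V \<union> R\<^sup>+"

definition EW :: "'a set \<Rightarrow> 'a rel \<Rightarrow> 'a set \<Rightarrow> 'a rel" where
  "EW V E W = Id_on (V - W) O E"

definition BW :: "'a set \<Rightarrow> 'a rel \<Rightarrow> 'a set \<Rightarrow> 'a rel" where
  "BW V E W = E O rstar V (EW V E W)"

definition BWm :: "'a set \<Rightarrow> 'a rel \<Rightarrow> 'a set \<Rightarrow> 'a rel" where
  "BWm V E W = converse (BW V E W)"

definition KW :: "'a set \<Rightarrow> 'a rel \<Rightarrow> 'a set \<Rightarrow> 'a rel" where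
  "KW V E W = BWm V E W O Id_on (V - W) O BW V E W"

definition CW :: "'a set \<Rightarrow> 'a rel \<Rightarrow> 'a set \<Rightarrow> 'a rel" where
  "CW V E W = (Id_on W O KW V E W O Id_on W)\<^sup>+ \<union> Id_on W"

definition AW :: "'a set \<Rightarrow> 'a rel \<Rightarrow> 'a set \<Rightarrow> 'a rel" where
  "AW V E W = Id_on V \<union> BW V E W \<union> BWm V E W \<union> KW V E W \<union>
     (BW V E W \<union> KW V E W) O CW V E W O (BWm V E W \<union> converse (KW V E W))"

definition RW :: "'a set \<Rightarrow> 'a rel \<Rightarrow> 'a set \<Rightarrow> 'a rel" where
  "RW V E W = Id_on V \<union> CW V E W O (BWm V E W \<union> converse (KW V E W))"

definition RWm :: "'a set \<Rightarrow> 'a rel \<Rightarrow> 'a set \<Rightarrow> 'a rel" where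
  "RWm V E W = Id_on V \<union> (BW V E W \<union> KW V E W) O CW V E W"

end

theory Submission imports Defs begin

lemma S_char:
  assumes "E \<subseteq> V \<times> V"
  shows "rstar V (converse (EW V E W)) O rstar V (EW V E W) =
    Id_on V \<union> Id_on (V - W) O BW V E W \<union> BWm V E W O Id_on (V - W) \<union> KW V E W"
proof -
  let ?D = "Id_on (V - W)"
  let ?F = "EW V E W"
  have FV: "?F \<subseteq> V \<times> V" using assms unfolding EW_def by auto
  hence FpV: "?F\<^sup>+ \<subseteq> V \<times> V" by (metis trancl_subset_Sigma)
  have EV: "E O Id_on V = E" using assms by auto
  have "?D O BW V E W = ?D O E \<union> ?D O E O ?F\<^sup>+"
    by (simp only: BW_def rstar_def relcomp_distrib EV O_assoc)
  also have "\<dots> = ?F O (Id \<union> ?F\<^sup>+)"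
    unfolding relcomp_distrib R_O_Id by (simp only: EW_def O_assoc)
  also have "\<dots> = ?F O ?F\<^sup>*"
    using rtrancl_trancl_reflcl[of ?F] by (simp add: sup_commute)
  also have "\<dots> = ?F\<^sup>+" by (rule trancl_unfold_left[symmetric])
  finally have 1: "?D O BW V E W = ?F\<^sup>+" .
  have DD: "?D O (?D O X) = ?D O X" for X by auto
  have 2: "(converse ?F)\<^sup>+ = BWm V E W O ?D"
    unfolding BWm_def trancl_converse 1[symmetric] by (simp only: converse_relcomp converse_Id_on)
  have 3: "KW V E W = (converse ?F)\<^sup>+ O ?F\<^sup>+"
    unfolding KW_def 2 1[symmetric] by (simp only: O_assoc DD)
  have a: "Id_on V O ?F\<^sup>+ = ?F\<^sup>+" using FpV by auto
  have b: "(converse ?F)\<^sup>+ O Id_on V = (converse ?F)\<^sup>+" using FpV unfolding trancl_converse by auto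
  have "rstar V (converse ?F) O rstar V ?F = Id_on V O Id_on V \<union> Id_on V O ?F\<^sup>+ \<union> ((converse ?F)\<^sup>+ O Id_on V \<union> (converse ?F)\<^sup>+ O ?F\<^sup>+)"
    unfolding rstar_def by (simp only: relcomp_distrib relcomp_distrib2 Un_ac)
  also have "\<dots> = Id_on V \<union> ?F\<^sup>+ \<union> ((converse ?F)\<^sup>+ \<union> (converse ?F)\<^sup>+ O ?F\<^sup>+)"
    unfolding a b by auto
  finally show ?thesis unfolding 3 2 1 by (simp only: Un_ac)
qed

lemma mem5: "x \<in> V - W \<Longrightarrow> (x,a) \<in> P \<Longrightarrow> (a,b) \<in> Q \<Longrightarrow> (b,y) \<in> R \<Longrightarrow> y \<in> V - W
  \<Longrightarrow> (x,y) \<in> Id_on (V - W) O P O Q O R O Id_on (V - W)"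
  by blast

lemma mem3: "x \<in> V - W \<Longrightarrow> (x,y) \<in> P \<Longrightarrow> y \<in> V - W
  \<Longrightarrow> (x,y) \<in> Id_on (V - W) O P O Id_on (V - W)"
  by blast

lemma abstr:
  fixes B K C :: "'a rel"
  assumes BV: "B \<subseteq> V \<times> V" and W: "W \<subseteq> V"
    and Cw: "\<And>a b. (a,b) \<in> C \<Longrightarrow> a \<in> W \<and> b \<in> W"
    and Ctr: "\<And>a b c d. (a,b) \<in> C \<Longrightarrow> (b,c) \<in> K \<Longrightarrow> c \<in> W \<Longrightarrow> (c,d) \<in> C \<Longrightarrow> (a,d) \<in> C"
    and Ctr2: "\<And>a b c. (a,b) \<in> C \<Longrightarrow> (b,c) \<in> C \<Longrightarrow> (a,c) \<in> C"
    and Ks: "\<And>a b. (a,b) \<in> K \<Longrightarrow> (b,a) \<in> K"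
    and Cr: "\<And>a. a \<in> W \<Longrightarrow> (a,a) \<in> C"
  shows "Id_on (V - W) O (Id_on V \<union> (B \<union> K) O C) O
      (Id_on V \<union> Id_on (V - W) O B \<union> converse B O Id_on (V - W) \<union> K) O
      (Id_on V \<union> C O (converse B \<union> converse K)) O Id_on (V - W)
    = Id_on (V - W) O (Id_on V \<union> B \<union> converse B \<union> K \<union> (B \<union> K) O C O (converse B \<union> converse K)) O Id_on (V - W)"
  (is "?L = ?R")
proof
  show "?L \<subseteq> ?R"
  proof (rule subrelI)
    fix x y assume "(x,y) \<in> ?L"
    then obtain a b where x: "x \<in> V - W" and y: "y \<in> V - W"
      and xa: "(x,a) \<in> Id_on V \<union> (B \<union> K) O C"
      and ab: "(a,b) \<in> Id_on V \<union> Id_on (V - W) O B \<union> converse B O Id_on (V - W) \<union> K"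
      and by': "(b,y) \<in> Id_on V \<union> C O (converse B \<union> converse K)" by blast
    have M: "(x,y) \<in> Id_on V \<union> B \<union> converse B \<union> K \<union> (B \<union> K) O C O (converse B \<union> converse K)"
    proof (cases "x = a")
      case True
      note xa' = True
      show ?thesis
      proof (cases "b = y")
        case True then show ?thesis using x y ab xa' by auto
      next
        case False
        then obtain c where bc: "(b,c) \<in> C" and cy: "(c,y) \<in> converse B \<union> converse K" using by' by blast
        have "b \<in> W" using Cw bc by blast
        then have "(a,b) \<in> B \<union> K" using ab x xa' by blast
        then have "(x,y) \<in> (B \<union> K) O C O (converse B \<union> converse K)" using xa' bc cy by blast
        then show ?thesis by blast
      qed
    next
      case False
      then obtain c where xc: "(x,c) \<in> B \<union> K" and ca: "(c,a) \<in> C" using xa by blast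
      have aW: "a \<in> W" using Cw ca by blast
      show ?thesis
      proof (cases "b = y")
        case True
        have "(a,b) \<in> converse B \<union> K" using ab aW True y by blast
        then have "(a,y) \<in> converse B \<union> converse K" using True Ks by blast
        then have "(x,y) \<in> (B \<union> K) O C O (converse B \<union> converse K)" using xc ca by blast
        then show ?thesis by blast
      next
        case False
        then obtain d where bd: "(b,d) \<in> C" and dy: "(d,y) \<in> converse B \<union> converse K" using by' by blast
        have bW: "b \<in> W" using Cw bd by blast
        have "a = b \<or> (a,b) \<in> K" using ab aW bW by blast
        then have "(c,d) \<in> C"
        proof
          assume "a = b" then show ?thesis using ca bd Ctr2 by blast
        next
          assume "(a,b) \<in> K" then show ?thesis using Ctr[OF ca _ bW bd] by blast
        qed
        then have "(x,y) \<in> (B \<union> K) O C O (converse B \<union> converse K)" using xc dy by blast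
        then show ?thesis by blast
      qed
    qed
    from mem3[OF x M y] show "(x,y) \<in> ?R" .
  qed
next
  show "?R \<subseteq> ?L"
  proof (rule subrelI)
    fix x y assume "(x,y) \<in> ?R"
    then obtain x: "x \<in> V - W" and y: "y \<in> V - W"
      and xy: "(x,y) \<in> Id_on V \<union> B \<union> converse B \<union> K \<union> (B \<union> K) O C O (converse B \<union> converse K)" by blast
    show "(x,y) \<in> ?L"
    proof (cases "(x,y) \<in> (B \<union> K) O C O (converse B \<union> converse K)")
      case True
      then obtain c d where xc: "(x,c) \<in> B \<union> K" and cd: "(c,d) \<in> C" and dy: "(d,y) \<in> converse B \<union> converse K" by blast
      have dW: "d \<in> W" using Cw cd by blast
      show ?thesis
      proof (rule mem5[OF x _ _ _ y])
        show "(x,d) \<in> Id_on V \<union> (B \<union> K) O C" using xc cd by blast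
        show "(d,d) \<in> Id_on V \<union> Id_on (V - W) O B \<union> converse B O Id_on (V - W) \<union> K" using dW W by blast
        show "(d,y) \<in> Id_on V \<union> C O (converse B \<union> converse K)" using dy Cr dW by blast
      qed
    next
      case False
      then have xy': "(x,y) \<in> Id_on V \<union> B \<union> converse B \<union> K" using xy by blast
      show ?thesis
      proof (rule mem5[OF x _ _ _ y])
        show "(x,x) \<in> Id_on V \<union> (B \<union> K) O C" using x by blast
        show "(x,y) \<in> Id_on V \<union> Id_on (V - W) O B \<union> converse B O Id_on (V - W) \<union> K" using xy' x y by blast
        show "(y,y) \<in> Id_on V \<union> C O (converse B \<union> converse K)" using y by blast
      qed
    qed
  qed
qed

theorem lemma5:
  fixes V W :: "'a set" and E :: "'a rel"
  assumes "V \<noteq> {}" and "E \<subseteq> V \<times> V" and "W \<subseteq> V"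
  shows "Id_on (V - W) O RWm V E W O rstar V (converse (EW V E W)) O rstar V (EW V E W)
           O RW V E W O Id_on (V - W)
         = Id_on (V - W) O AW V E W O Id_on (V - W)"
proof -
  let ?B = "BW V E W" and ?K = "KW V E W" and ?C = "CW V E W"
  let ?G = "Id_on W O ?K O Id_on W"
  have FV: "EW V E W \<subseteq> V \<times> V" using assms(2) unfolding EW_def by auto
  hence FpV: "(EW V E W)\<^sup>+ \<subseteq> V \<times> V" by (metis trancl_subset_Sigma)
  have BV: "?B \<subseteq> V \<times> V" using assms(2) FpV unfolding BW_def rstar_def by blast
  have GW: "?G \<subseteq> W \<times> W" by blast
  hence GpW: "?G\<^sup>+ \<subseteq> W \<times> W" by (metis trancl_subset_Sigma)
  have Cw: "\<And>a b. (a,b) \<in> ?C \<Longrightarrow> a \<in> W \<and> b \<in> W" unfolding CW_def using GpW by blast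
  have Cr: "\<And>a. a \<in> W \<Longrightarrow> (a,a) \<in> ?C" unfolding CW_def by blast
  have Ks: "\<And>a b. (a,b) \<in> ?K \<Longrightarrow> (b,a) \<in> ?K" unfolding KW_def BWm_def by blast
  have Ctr2: "\<And>a b c. (a,b) \<in> ?C \<Longrightarrow> (b,c) \<in> ?C \<Longrightarrow> (a,c) \<in> ?C"
  proof -
    fix a b c assume ab: "(a,b) \<in> ?C" and bc: "(b,c) \<in> ?C"
    show "(a,c) \<in> ?C"
    proof (cases "(a,b) \<in> ?G\<^sup>+ \<and> (b,c) \<in> ?G\<^sup>+")
      case True then show ?thesis unfolding CW_def by (meson UnI1 trancl_trans)
    next
      case False then show ?thesis using ab bc unfolding CW_def by blast
    qed
  qed
  have Ctr: "\<And>a b c d. (a,b) \<in> ?C \<Longrightarrow> (b,c) \<in> ?K \<Longrightarrow> c \<in> W \<Longrightarrow> (c,d) \<in> ?C \<Longrightarrow> (a,d) \<in> ?C"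
  proof -
    fix a b c d assume ab: "(a,b) \<in> ?C" and bc: "(b,c) \<in> ?K" and c: "c \<in> W" and cd: "(c,d) \<in> ?C"
    have "b \<in> W" using Cw ab by blast
    hence "(b,c) \<in> ?G" using bc c by blast
    hence "(b,c) \<in> ?C" unfolding CW_def by blast
    thus "(a,d) \<in> ?C" using Ctr2 ab cd by blast
  qed
  have main: "Id_on (V - W) O (Id_on V \<union> (?B \<union> ?K) O ?C) O
      (Id_on V \<union> Id_on (V - W) O ?B \<union> converse ?B O Id_on (V - W) \<union> ?K) O
      (Id_on V \<union> ?C O (converse ?B \<union> converse ?K)) O Id_on (V - W)
    = Id_on (V - W) O (Id_on V \<union> ?B \<union> converse ?B \<union> ?K \<union> (?B \<union> ?K) O ?C O (converse ?B \<union> converse ?K)) O Id_on (V - W)"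
    by (rule abstr[OF BV assms(3) Cw Ctr Ctr2 Ks Cr])
  have S: "rstar V (converse (EW V E W)) O rstar V (EW V E W) =
    Id_on V \<union> Id_on (V - W) O ?B \<union> converse ?B O Id_on (V - W) \<union> ?K"
    using S_char[OF assms(2)] unfolding BWm_def .
  have S': "rstar V (converse (EW V E W)) O (rstar V (EW V E W) O X) =
    (Id_on V \<union> Id_on (V - W) O ?B \<union> converse ?B O Id_on (V - W) \<union> ?K) O X" for X
    using S by (metis O_assoc)
  show ?thesis
    unfolding RWm_def RW_def AW_def BWm_def[of V E W] S'
    using main by (simp only: O_assoc)
qed

end
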